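(* Every subset $X\subseteq\mathbb{Z}_6^2$ with $|X|=13$ contains a subset $S$ with $|S|=6$ and $\sum_{s\in S}s=(0,0)$. Consequently (since the $12$-element set $\{0,1\}\times\mathbb{Z}_6$ contains no such $6$-element zero-sum subset) $g(\mathbb{Z}_6^2)=13$.
   Context: For a finite abelian group $G$, $g(G)$ is the smallest positive integer $t$ such that every subset $X\subseteq G$ with $|X|\ge t$ contains a subset $S$ with $|S|=\exp(G)$ and $\sum_{s\in S}s=0_G$. Here $\exp(\mathbb{Z}_6^2)=6$. *)

theory Defs
  imports Main "HOL-Library.Numeral_Type" "HOL-Library.Product_Plus"
begin

text \<open>The group Z_6^2 is rendered as the product type 6 \<times> 6 (type 6 = integers mod 6,
  with componentwise addition from Product_Plus).\<close>

definition has_zero_sum_subset :: "nat \<Rightarrow> 'a::comm_monoid_add set \<Rightarrow> bool" where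
  "has_zero_sum_subset n X \<longleftrightarrow> (\<exists>S. S \<subseteq> X \<and> card S = n \<and> (\<Sum>s\<in>S. s) = 0)"

definition group_exp :: "'a::{finite,ab_group_add} itself \<Rightarrow> nat" where
  "group_exp T = (LEAST n. n > 0 \<and> (\<forall>x::'a. (\<Sum>i<n. x) = 0))"

definition g_const :: "'a::{finite,ab_group_add} itself \<Rightarrow> nat" where
  "g_const T = (LEAST t. t > 0 \<and>
     (\<forall>X::'a set. card X \<ge> t \<longrightarrow> has_zero_sum_subset (group_exp T) X))"

end

theory Submission
  imports Defs
begin

type_synonym g3 = "3 \<times> 3"

lemma UNIV3: "(UNIV::3 set) = {0,1,2}"
  by (rule sym, rule card_subset_eq) auto

lemma tri3: "3 * (a::3) = 0"
proof - have "a \<in> UNIV" by simp then show ?thesis unfolding UNIV3 by auto qed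

lemma tri: "(a::g3)+a+a = 0"
  by (cases a) (simp add: tri3 zero_prod_def)

lemma cardU: "card (UNIV::g3 set) = 9" by simp

lemma dbl: "(a::g3) + a = - a"
  using tri[of a] by (simp add: eq_neg_iff_add_eq_0)

lemma no2: "(a::g3) + a = 0 \<Longrightarrow> a = 0"
  using dbl[of a] by simp

lemma dbl_neg: "- (a::g3) - a = a"
  using dbl[of a] by (metis add_uminus_conv_diff minus_add_distrib minus_minus)

definition S2 :: "g3 set \<Rightarrow> g3 set" where
  "S2 A = {s. \<exists>x\<in>A. \<exists>y\<in>A. x \<noteq> y \<and> s = x + y}"

lemma S2_mono: "A \<subseteq> B \<Longrightarrow> S2 A \<subseteq> S2 B"
  unfolding S2_def by blast

lemma pig:
  fixes X Y :: "g3 set"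
  assumes "card X + card Y \<ge> 10"
  shows "\<exists>x\<in>X. \<exists>y\<in>Y. x + y = t"
proof (rule ccontr)
  assume n: "\<not> ?thesis"
  let ?Y = "(\<lambda>y. t - y) ` Y"
  have inj: "inj_on (\<lambda>y. t - y) Y" by (rule inj_onI) simp
  have cY: "card ?Y = card Y" using card_image[OF inj] .
  have "X \<inter> ?Y = {}" using n by force
  then have "card (X \<union> ?Y) = card X + card ?Y" by (simp add: card_Un_disjoint)
  moreover have "card (X \<union> ?Y) \<le> 9" using card_mono[of UNIV "X \<union> ?Y"] by simp
  ultimately show False using assms cY by simp
qed

lemma S2_pair:
  fixes A :: "g3 set"
  assumes "card (A - {-t}) \<ge> 5"
  shows "t \<in> S2 A"
proof -
  let ?A = "A - {-t}"
  let ?M = "UNIV - {-t} :: g3 set"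
  let ?Y = "(\<lambda>x. t - x) ` ?A"
  have inj: "inj_on (\<lambda>x. t - x) ?A" by (rule inj_onI) simp
  have cY: "card ?Y = card ?A" using card_image[OF inj] .
  have cM: "card ?M = 8" by (simp add: card_Diff_singleton)
  have sub1: "?A \<subseteq> ?M" by blast
  have sub2: "?Y \<subseteq> ?M"
  proof
    fix z assume "z \<in> ?Y"
    then obtain x where x: "x \<in> ?A" "z = t - x" by blast
    have "t - x \<noteq> -t"
    proof
      assume h: "t - x = -t"
      have "x = t - (t - x)" by simp
      also have "\<dots> = t + t" using h by simp
      finally have "x = t + t" .
      then have "x = -t" using dbl by simp
      then show False using x by simp
    qed
    then show "z \<in> ?M" using x by simp
  qed
  have "?A \<inter> ?Y \<noteq> {}"
  proof
    assume e: "?A \<inter> ?Y = {}"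
    then have "card (?A \<union> ?Y) = card ?A + card ?Y" by (simp add: card_Un_disjoint)
    moreover have "card (?A \<union> ?Y) \<le> 8" using card_mono[of ?M "?A \<union> ?Y"] sub1 sub2 cM by simp
    ultimately show False using assms cY by simp
  qed
  then obtain x y where xy: "x \<in> ?A" "y \<in> ?A" "x = t - y" by blast
  have "x \<noteq> y"
  proof
    assume "x = y"
    then have "t = x + x" using xy by (simp add: diff_eq_eq)
    then have "x = -t" using dbl_neg[of x] dbl[of x] by simp
    then show False using xy by simp
  qed
  then show ?thesis unfolding S2_def using xy by force
qed

lemma S2_full:
  fixes A :: "g3 set"
  assumes "card A \<ge> 6"
  shows "t \<in> S2 A"
proof -
  have "card (A - {-t}) \<ge> card A - 1" by (simp add: card_Diff_singleton_if)
  then show ?thesis using assms S2_pair by simp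
qed

lemma S4_full:
  fixes A :: "g3 set"
  assumes "card A \<ge> 6"
  shows "\<exists>B\<subseteq>A. card B = 4 \<and> \<Sum>B = t"
proof -
  obtain A6 where A6: "A6 \<subseteq> A" "card A6 = 6" "finite A6"
    using obtain_subset_with_card_n[OF assms] by blast
  have "\<Sum>A6 - t \<in> S2 A6" using S2_full A6 by simp
  then obtain x y where xy: "x \<in> A6" "y \<in> A6" "x \<noteq> y" "\<Sum>A6 - t = x + y"
    unfolding S2_def by blast
  let ?B = "A6 - {x,y}"
  have "card ?B = 4" using A6 xy by (simp add: card_Diff_subset)
  moreover have "\<Sum>?B = t"
  proof -
    have "\<Sum>?B = \<Sum>A6 - \<Sum>{x,y}" using A6 xy by (simp add: sum_diff)
    also have "\<Sum>{x,y} = x + y" using xy by simp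
    finally show ?thesis using xy by (simp add: algebra_simps)
  qed
  ultimately show ?thesis using A6 by blast
qed

lemma coll:
  fixes x y z w :: g3
  assumes "x + y = z + w" "x + z = y + w"
  shows "y = z"
proof -
  have "y - z = (x + y) - (x + z)" by simp
  also have "\<dots> = (z + w) - (y + w)" using assms by simp
  also have "\<dots> = z - y" by simp
  finally have "(y - z) + (y - z) = 0" by (simp add: algebra_simps)
  then have "y - z = 0" by (rule no2)
  then show ?thesis by simp
qed

lemma get4:
  assumes "card (A::g3 set) \<ge> 4"
  obtains a b c d where "a \<in> A" "b \<in> A" "c \<in> A" "d \<in> A"
    "a \<noteq> b" "a \<noteq> c" "a \<noteq> d" "b \<noteq> c" "b \<noteq> d" "c \<noteq> d"
proof -
  obtain A4 where A4: "A4 \<subseteq> A" "card A4 = 4" "finite A4"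
    using obtain_subset_with_card_n[OF assms] by blast
  then have "A4 \<noteq> {}" by auto
  then obtain a where a: "a \<in> A4" by blast
  have "card (A4 - {a}) = 3" using A4 a by simp
  then obtain b c d where e: "A4 - {a} = {b,c,d}" "b \<noteq> c" "c \<noteq> d" "b \<noteq> d"
    unfolding card_3_iff by blast
  have "b \<in> A4 - {a}" "c \<in> A4 - {a}" "d \<in> A4 - {a}" using e(1) by simp_all
  then have "a \<in> A" "b \<in> A" "c \<in> A" "d \<in> A" "a \<noteq> b" "a \<noteq> c" "a \<noteq> d"
    using A4(1) a by auto
  then show ?thesis using that e(2-4) by simp
qed

lemma get3:
  assumes "card (A::g3 set) \<ge> 3"
  obtains a b c where "a \<in> A" "b \<in> A" "c \<in> A" "a \<noteq> b" "a \<noteq> c" "b \<noteq> c"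
proof -
  obtain A3 where A3: "A3 \<subseteq> A" "card A3 = 3" "finite A3"
    using obtain_subset_with_card_n[OF assms] by blast
  then obtain a b c where e: "A3 = {a,b,c}" "a \<noteq> b" "b \<noteq> c" "a \<noteq> c"
    unfolding card_3_iff by blast
  have "a \<in> A" "b \<in> A" "c \<in> A" using A3(1) e(1) by auto
  then show ?thesis using that e(2-4) by simp
qed

lemma S2I: "x \<in> A \<Longrightarrow> y \<in> A \<Longrightarrow> x \<noteq> y \<Longrightarrow> x + y \<in> S2 A"
  unfolding S2_def by blast

lemma S2_3:
  assumes "card (A::g3 set) \<ge> 3"
  shows "card (S2 A) \<ge> 3"
proof -
  obtain a b c where abc: "a \<in> A" "b \<in> A" "c \<in> A" "a \<noteq> b" "a \<noteq> c" "b \<noteq> c"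
    using get3[OF assms] by blast
  have sub: "{a+b, a+c, b+c} \<subseteq> S2 A" using abc by (auto intro: S2I)
  have "a + b \<noteq> a + c" "a + b \<noteq> b + c" "a + c \<noteq> b + c" using abc
    by (simp_all add: add.commute[of a b])
  then have "card {a+b, a+c, b+c} = 3" by simp
  then show ?thesis using card_mono[OF _ sub] by simp
qed

lemma S2_4:
  assumes "card (A::g3 set) \<ge> 4"
  shows "card (S2 A) \<ge> 5"
proof -
  obtain a b c d where abcd: "a \<in> A" "b \<in> A" "c \<in> A" "d \<in> A"
    "a \<noteq> b" "a \<noteq> c" "a \<noteq> d" "b \<noteq> c" "b \<noteq> d" "c \<noteq> d"
    using get4[OF assms] by blast
  have ne: "a+b \<noteq> a+c" "a+b \<noteq> a+d" "a+b \<noteq> b+c" "a+b \<noteq> b+d"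
     "a+c \<noteq> a+d" "a+c \<noteq> b+c" "a+c \<noteq> c+d" "a+d \<noteq> b+d" "a+d \<noteq> c+d"
     "b+c \<noteq> b+d" "b+c \<noteq> c+d" "b+d \<noteq> c+d"
    using abcd by (simp_all add: add.commute[of a b] add.commute[of a c] add.commute[of b c]
        add.commute[of a d] add.commute[of b d] add.commute[of c d])
  have fin: "finite (S2 A)" by simp
  have c1: "\<not> (a+b = c+d \<and> a+c = b+d)" using coll[of a b c d] abcd by blast
  have c2: "\<not> (a+b = c+d \<and> a+d = b+c)" using coll[of a b d c] abcd by (auto simp: add.commute)
  have c3: "\<not> (a+c = b+d \<and> a+d = b+c)" using coll[of a c d b] abcd by (auto simp: add.commute)
  consider (n1) "a+b \<noteq> c+d" "a+c \<noteq> b+d" | (n2) "a+b = c+d" | (n3) "a+c = b+d" "a+b \<noteq> c+d"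
    by blast
  then show ?thesis
  proof cases
    case n1
    have sub: "{a+b, c+d, a+c, b+d, a+d} \<subseteq> S2 A" using abcd by (auto intro: S2I)
    have "card {a+b, c+d, a+c, b+d, a+d} = 5" using n1 ne by (simp add: eq_commute)
    then show ?thesis using card_mono[OF fin sub] by simp
  next
    case n2
    then have "a+c \<noteq> b+d" "a+d \<noteq> b+c" using c1 c2 by auto
    have sub: "{a+b, a+c, b+d, a+d, b+c} \<subseteq> S2 A" using abcd by (auto intro: S2I)
    have "card {a+b, a+c, b+d, a+d, b+c} = 5" using \<open>a+c \<noteq> b+d\<close> \<open>a+d \<noteq> b+c\<close> ne by (simp add: eq_commute)
    then show ?thesis using card_mono[OF fin sub] by simp
  next
    case n3
    then have "a+d \<noteq> b+c" using c3 by auto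
    have sub: "{a+b, c+d, a+c, a+d, b+c} \<subseteq> S2 A" using abcd by (auto intro: S2I)
    have "card {a+b, c+d, a+c, a+d, b+c} = 5" using n3 \<open>a+d \<noteq> b+c\<close> ne by (simp add: eq_commute)
    then show ?thesis using card_mono[OF fin sub] by simp
  qed
qed

lemma negs:
  fixes a b c :: g3
  assumes "a + b + c = 0"
  shows "-a = b + c" "-b = a + c" "-c = a + b"
proof -
  have "a + (b + c) = 0" using assms by (simp add: add.assoc)
  then have "b + c = -a" by (simp only: add_eq_0_iff)
  then show "-a = b + c" by simp
  have "b + (a + c) = 0" using assms by (simp add: ac_simps)
  then have "a + c = -b" by (simp only: add_eq_0_iff)
  then show "-b = a + c" by simp
  have "c + (a + b) = 0" using assms by (simp add: ac_simps)
  then have "a + b = -c" by (simp only: add_eq_0_iff)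
  then show "-c = a + b" by simp
qed

lemma cap:
  assumes "card (A::g3 set) \<ge> 5"
  shows "\<exists>a\<in>A. \<exists>b\<in>A. \<exists>c\<in>A. a \<noteq> b \<and> a \<noteq> c \<and> b \<noteq> c \<and> a + b + c = 0"
proof (rule ccontr)
  assume n: "\<not> ?thesis"
  obtain A5 where A5: "A5 \<subseteq> A" "card A5 = 5" "finite A5"
    using obtain_subset_with_card_n[OF assms] by blast
  have disj: "S2 A5 \<inter> uminus ` A5 = {}"
  proof (rule ccontr)
    assume "S2 A5 \<inter> uminus ` A5 \<noteq> {}"
    then obtain x y z where xyz: "x \<in> A5" "y \<in> A5" "x \<noteq> y" "z \<in> A5" "x + y = - z"
      unfolding S2_def by blast
    then have e: "x + y + z = 0" by (simp add: eq_neg_iff_add_eq_0)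
    have "z \<noteq> x"
    proof
      assume "z = x"
      then have "y + (x + x) = 0" using e by (simp add: algebra_simps)
      then have "y = - (x + x)" by (simp only: add_eq_0_iff2)
      then have "y = x" by (simp only: dbl minus_minus)
      then show False using xyz by simp
    qed
    moreover have "z \<noteq> y"
    proof
      assume "z = y"
      then have "x + (y + y) = 0" using e by (simp add: algebra_simps)
      then have "x = - (y + y)" by (simp only: add_eq_0_iff2)
      then have "x = y" by (simp only: dbl minus_minus)
      then show False using xyz by simp
    qed
    moreover have "x \<in> A" "y \<in> A" "z \<in> A" using xyz A5 by auto
    ultimately have "x \<noteq> y \<and> x \<noteq> z \<and> y \<noteq> z \<and> x + y + z = 0" using xyz(3) e by simp
    then show False using n \<open>x \<in> A\<close> \<open>y \<in> A\<close> \<open>z \<in> A\<close> by blast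
  qed
  have "card (uminus ` A5) = 5" using A5 by (simp add: card_image)
  moreover have "card (S2 A5 \<union> uminus ` A5) = card (S2 A5) + card (uminus ` A5)"
    using card_Un_disjoint[OF _ _ disj] by simp
  moreover have "card (S2 A5 \<union> uminus ` A5) \<le> 9"
    using card_mono[of UNIV "S2 A5 \<union> uminus ` A5"] by simp
  ultimately have "card (S2 A5) + 5 \<le> 9" by simp
  moreover have "card (S2 A5) \<ge> 5" using S2_4 A5 by simp
  ultimately show False by simp
qed

lemma S2_5:
  assumes "card (A::g3 set) \<ge> 5"
  shows "card (S2 A) \<ge> 7"
proof -
  obtain A5 where A5: "A5 \<subseteq> A" "card A5 = 5" "finite A5"
    using obtain_subset_with_card_n[OF assms] by blast
  obtain a b c where abc: "a \<in> A5" "b \<in> A5" "c \<in> A5" "a \<noteq> b" "a \<noteq> c" "b \<noteq> c" "a + b + c = 0"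
  proof -
    have "\<exists>a\<in>A5. \<exists>b\<in>A5. \<exists>c\<in>A5. a \<noteq> b \<and> a \<noteq> c \<and> b \<noteq> c \<and> a + b + c = 0"
      using cap[of A5] A5(2) by simp
    then show ?thesis using that by blast
  qed
  have sub: "UNIV - S2 A5 \<subseteq> uminus ` (A5 - {a,b,c})"
  proof
    fix s assume s: "s \<in> UNIV - S2 A5"
    have lt: "card (A5 - {-s}) < 5"
    proof (rule ccontr)
      assume "\<not> card (A5 - {-s}) < 5"
      then have "card (A5 - {-s}) \<ge> 5" by simp
      then have "s \<in> S2 A5" by (rule S2_pair)
      then show False using s by simp
    qed
    have m: "-s \<in> A5"
    proof (rule ccontr)
      assume "-s \<notin> A5"
      then have "A5 - {-s} = A5" by simp
      then show False using lt A5(2) by simp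
    qed
    have "-s \<noteq> a"
    proof
      assume "-s = a"
      then have "s = - a" by (simp add: minus_equation_iff eq_commute)
      then have "s = b + c" using negs(1)[OF abc(7)] by simp
      then show False using s abc S2I[of b A5 c] by simp
    qed
    moreover have "-s \<noteq> b"
    proof
      assume "-s = b"
      then have "s = - b" by (simp add: minus_equation_iff eq_commute)
      then have "s = a + c" using negs(2)[OF abc(7)] by simp
      then show False using s abc S2I[of a A5 c] by simp
    qed
    moreover have "-s \<noteq> c"
    proof
      assume "-s = c"
      then have "s = - c" by (simp add: minus_equation_iff eq_commute)
      then have "s = a + b" using negs(3)[OF abc(7)] by simp
      then show False using s abc S2I[of a A5 b] by simp
    qed
    ultimately have "-s \<in> A5 - {a,b,c}" using m by simp
    then show "s \<in> uminus ` (A5 - {a,b,c})" using image_eqI[of s uminus "-s" "A5 - {a,b,c}"] by simp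
  qed
  have c2: "card (A5 - {a,b,c}) = 2" using A5 abc by (simp add: card_Diff_subset)
  have f1: "finite (A5 - {a,b,c})" by simp
  have "card (UNIV - S2 A5) \<le> card (uminus ` (A5 - {a,b,c}))"
    using card_mono[OF finite_imageI[OF f1] sub] .
  also have "\<dots> \<le> 2" using card_image_le[OF f1, of uminus] c2 by simp
  finally have c3: "card (UNIV - S2 A5) \<le> 2" .
  have "card (UNIV - S2 A5) = 9 - card (S2 A5)" by (simp add: card_Diff_subset)
  then have "card (S2 A5) \<ge> 7" using c3 by simp
  then show ?thesis using card_mono[OF _ S2_mono[OF A5(1)]] by simp
qed

definition Dset :: "g3 \<Rightarrow> g3 set" where "Dset d = {0, d, -d}"
definition line :: "g3 \<Rightarrow> g3 \<Rightarrow> g3 set" where "line d c = {c, c + d, c - d}"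
definition sumset :: "g3 set \<Rightarrow> g3 set \<Rightarrow> g3 set" where
  "sumset Y Z = {s. \<exists>y\<in>Y. \<exists>z\<in>Z. s = y + z}"

lemma dd: "(d::g3) + d = - d" by (rule dbl)
lemma ndnd: "- (d::g3) + - d = d" using dbl[of "-d"] by simp

lemma Dset_add: "m \<in> Dset d \<Longrightarrow> m' \<in> Dset d \<Longrightarrow> m + m' \<in> Dset d"
  unfolding Dset_def using dd[of d] ndnd[of d] by auto

lemma Dset_neg: "m \<in> Dset d \<Longrightarrow> - m \<in> Dset d"
  unfolding Dset_def by auto

lemma Dset_diff: "m \<in> Dset d \<Longrightarrow> m' \<in> Dset d \<Longrightarrow> m - m' \<in> Dset d"
  using Dset_add[of m d "- m'"] Dset_neg[of m' d] by simp

lemma line_iff: "x \<in> line d c \<longleftrightarrow> x - c \<in> Dset d"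
  unfolding line_def Dset_def by (auto simp: algebra_simps)

lemma line_diff: "x \<in> line d c \<Longrightarrow> y \<in> line d c \<Longrightarrow> y - x \<in> Dset d"
proof -
  assume "x \<in> line d c" "y \<in> line d c"
  then have "x - c \<in> Dset d" "y - c \<in> Dset d" by (simp_all add: line_iff)
  then have "(y - c) - (x - c) \<in> Dset d" by (rule Dset_diff[rotated])
  then show ?thesis by simp
qed

lemma line_meet: "z \<in> line d x \<Longrightarrow> z \<in> line d y \<Longrightarrow> y - x \<in> Dset d"
proof -
  assume "z \<in> line d x" "z \<in> line d y"
  then have "z - x \<in> Dset d" "z - y \<in> Dset d" by (simp_all add: line_iff)
  then have "(z - x) - (z - y) \<in> Dset d" by (rule Dset_diff)
  then show ?thesis by simp
qed

lemma line_neg: "line (- d) c = line d c"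
  unfolding line_def by auto

lemma pm: "(d::g3) \<noteq> 0 \<Longrightarrow> c + d \<noteq> c - d"
proof
  assume d: "d \<noteq> 0" and e: "c + d = c - d"
  from e have "(c + d) - c = (c - d) - c" by simp
  then have "d = - d" by simp
  then have "d + d = 0" by (simp add: eq_neg_iff_add_eq_0)
  then show False using no2 d by blast
qed

lemma line_card: "d \<noteq> 0 \<Longrightarrow> card (line d c) = 3"
proof -
  assume d: "d \<noteq> 0"
  have "c + d \<noteq> c - d" using pm d by blast
  then show ?thesis unfolding line_def using d by simp
qed

lemma line_sum: "d \<noteq> 0 \<Longrightarrow> \<Sum>(line d c) = 0"
proof -
  assume d: "d \<noteq> 0"
  have "c + d \<noteq> c - d" using pm d by blast
  then have "\<Sum>(line d c) = c + ((c + d) + (c - d))" unfolding line_def using d by simp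
  also have "\<dots> = c + c + c" by (simp add: algebra_simps)
  finally show ?thesis using tri by simp
qed

lemma line_pair:
  assumes d: "d \<noteq> 0" and m: "m \<in> Dset d"
  shows "\<exists>x y. x \<in> line d c \<and> y \<in> line d c \<and> x \<noteq> y \<and> x + y = - c + m"
proof -
  have ne: "c + d \<noteq> c - d" using pm d by blast
  have cc: "c + c = - c" by (rule dbl)
  consider "m = 0" | "m = d" | "m = - d" using m unfolding Dset_def by blast
  then show ?thesis
  proof cases
    case 1
    have "(c + d) + (c - d) = - c + m" using 1 cc by (simp add: algebra_simps)
    then show ?thesis using ne unfolding line_def by blast
  next
    case 2
    have "c + (c + d) = - c + m" using 2 cc by (simp add: algebra_simps)
    moreover have "c \<noteq> c + d" using d by simp
    ultimately show ?thesis unfolding line_def by blast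
  next
    case 3
    have "c + (c - d) = - c + m" using 3 cc by (simp add: algebra_simps)
    moreover have "c \<noteq> c - d" using d by simp
    ultimately show ?thesis unfolding line_def by blast
  qed
qed

lemma sub3:
  assumes "card (X::g3 set) = 3" "p \<in> X" "q \<in> X" "r \<in> X" "p \<noteq> q" "p \<noteq> r" "q \<noteq> r"
  shows "X = {p,q,r}"
proof -
  have "{p,q,r} \<subseteq> X" using assms by simp
  moreover have "card {p,q,r} = 3" using assms by simp
  ultimately show ?thesis using assms(1) by (metis card_subset_eq finite)
qed

lemma Kcore:
  assumes X: "card (X::g3 set) = 3" and t: "t \<noteq> 0"
    and uv: "u \<in> X" "v \<in> X" "u \<noteq> v" "u + t \<in> X" "v + t \<in> X"
  shows "\<exists>c. X = line t c"
proof -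
  have t2: "t + t \<noteq> 0" using no2 t by blast
  have ut: "u + t + t = u - t" using dd[of t] by (simp add: algebra_simps)
  have n1: "u \<noteq> u + t" using t by simp
  have n2: "u \<noteq> u - t" using t by simp
  have n3: "u + t \<noteq> u - t" using pm t by blast
  show ?thesis
  proof (cases "v = u + t")
    case True
    then have "u - t \<in> X" using uv ut by simp
    then have "X = {u, u + t, u - t}" using sub3[OF X] uv n1 n2 n3 by simp
    then show ?thesis unfolding line_def by blast
  next
    case False
    have vt: "v + t \<noteq> v" using t by simp
    have "v + t \<noteq> u + t" using uv by simp
    have Xe: "X = {u, u + t, v}" using sub3[OF X] uv False n1 by simp
    then have "v + t = u" using uv vt \<open>v + t \<noteq> u + t\<close> by auto
    then have "v = u - t" by (simp add: eq_diff_eq)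
    then have "X = {u, u + t, u - t}" using Xe by simp
    then show ?thesis unfolding line_def by blast
  qed
qed

lemma Khalf:
  assumes Y: "card (Y::g3 set) = 3" and S: "card (sumset Y Z) \<le> 4"
    and z: "z1 \<in> Z" "z2 \<in> Z" "z1 \<noteq> z2"
  shows "\<exists>c. Y = line (z2 - z1) c"
proof -
  let ?P = "(\<lambda>y. y + z1) ` Y" and ?Q = "(\<lambda>y. y + z2) ` Y"
  have cP: "card ?P = 3" using Y by (simp add: card_image)
  have cQ: "card ?Q = 3" using Y by (simp add: card_image)
  have "?P \<union> ?Q \<subseteq> sumset Y Z" unfolding sumset_def using z by blast
  then have "card (?P \<union> ?Q) \<le> 4" using S card_mono[of "sumset Y Z" "?P \<union> ?Q"] by simp
  moreover have "card (?P \<union> ?Q) + card (?P \<inter> ?Q) = card ?P + card ?Q"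
    using card_Un_Int[of ?P ?Q] by simp
  ultimately have "card (?P \<inter> ?Q) \<ge> 2" using cP cQ by simp
  then obtain W where W: "W \<subseteq> ?P \<inter> ?Q" "card W = 2" "finite W"
    using obtain_subset_with_card_n by blast
  then obtain w1 w2 where w: "W = {w1, w2}" "w1 \<noteq> w2" unfolding card_2_iff by blast
  have "w1 \<in> ?P \<inter> ?Q" "w2 \<in> ?P \<inter> ?Q" using W w by auto
  then obtain p1 q1 p2 q2 where pq: "p1 \<in> Y" "q1 \<in> Y" "p2 \<in> Y" "q2 \<in> Y"
    "w1 = p1 + z1" "w1 = q1 + z2" "w2 = p2 + z1" "w2 = q2 + z2" by blast
  let ?t = "z2 - z1"
  have t: "?t \<noteq> 0" using z by simp
  have "q1 + ?t = (q1 + z2) - z1" by (simp add: algebra_simps)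
  also have "\<dots> = (p1 + z1) - z1" using pq(5,6) by simp
  finally have e1: "q1 + ?t = p1" by simp
  have "q2 + ?t = (q2 + z2) - z1" by (simp add: algebra_simps)
  also have "\<dots> = (p2 + z1) - z1" using pq(7,8) by simp
  finally have e2: "q2 + ?t = p2" by simp
  have "q1 \<noteq> q2" using pq w by auto
  show ?thesis using Kcore[OF Y t pq(2) pq(4) \<open>q1 \<noteq> q2\<close>] e1 e2 pq by simp
qed

lemma sumset_comm: "sumset Y Z = sumset Z Y"
  unfolding sumset_def using add.commute by blast

lemma K:
  assumes Y: "card (Y::g3 set) = 3" and Z: "card Z = 3" and S: "card (sumset Y Z) \<le> 4"
  shows "\<exists>d c1 c2. d \<noteq> 0 \<and> Y = line d c1 \<and> Z = line d c2"
proof -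
  have "card Z \<ge> 3" using Z by simp
  then obtain z1 z2 z3 where z: "z1 \<in> Z" "z2 \<in> Z" "z3 \<in> Z" "z1 \<noteq> z2" "z1 \<noteq> z3" "z2 \<noteq> z3"
    by (rule get3)
  obtain c where c: "Y = line (z2 - z1) c" using Khalf[OF Y S z(1,2,4)] by blast
  let ?t = "z2 - z1"
  have t: "?t \<noteq> 0" using z by simp
  have y: "c \<in> Y" "c + ?t \<in> Y" "c \<noteq> c + ?t" using c t unfolding line_def by simp_all
  have S': "card (sumset Z Y) \<le> 4" using S sumset_comm by simp
  obtain c' where "Z = line ((c + ?t) - c) c'" using Khalf[OF Z S' y] by blast
  then have "Z = line ?t c'" by simp
  then show ?thesis using c t by blast
qed

definition GoodE :: "g3 set \<Rightarrow> g3 set \<Rightarrow> g3 set \<Rightarrow> g3 set \<Rightarrow> bool" where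
  "GoodE A0 A1 A2 A3 \<longleftrightarrow> (\<exists>B0 B1 B2 B3. B0 \<subseteq> A0 \<and> B1 \<subseteq> A1 \<and> B2 \<subseteq> A2 \<and> B3 \<subseteq> A3 \<and>
     card B0 + card B1 + card B2 + card B3 = 6 \<and>
     ((even (card B0) \<and> even (card B1) \<and> even (card B2) \<and> even (card B3)) \<or>
      (odd (card B0) \<and> odd (card B1) \<and> odd (card B2) \<and> odd (card B3))) \<and>
     \<Sum>B0 + \<Sum>B1 + \<Sum>B2 + \<Sum>B3 = 0)"

lemma GoodE_I:
  assumes "B0 \<subseteq> A0" "B1 \<subseteq> A1" "B2 \<subseteq> A2" "B3 \<subseteq> A3"
    "card B0 + card B1 + card B2 + card B3 = 6"
    "(even (card B0) \<and> even (card B1) \<and> even (card B2) \<and> even (card B3)) \<or>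
      (odd (card B0) \<and> odd (card B1) \<and> odd (card B2) \<and> odd (card B3))"
    "\<Sum>B0 + \<Sum>B1 + \<Sum>B2 + \<Sum>B3 = 0"
  shows "GoodE A0 A1 A2 A3"
  unfolding GoodE_def using assms by blast

lemma getpair:
  assumes "s \<in> S2 A"
  obtains P where "P \<subseteq> A" "card P = 2" "\<Sum>P = s"
proof -
  obtain x y where xy: "x \<in> A" "y \<in> A" "x \<noteq> y" "s = x + y" using assms unfolding S2_def by blast
  have "{x,y} \<subseteq> A" "card {x,y} = 2" "\<Sum>{x,y} = s" using xy by simp_all
  then show ?thesis by (rule that)
qed

lemma getpair2:
  assumes "card (A::g3 set) \<ge> 2"
  obtains P where "P \<subseteq> A" "card P = 2"
  using obtain_subset_with_card_n[OF assms] by blast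

lemma card_le9: "card (A::g3 set) \<le> 9"
  using card_mono[of UNIV A] by simp

lemma P222a:
  assumes "card (S2 X) + card (S2 Y) \<ge> 10" "card Z \<ge> 2"
  shows "\<exists>P Q R. P \<subseteq> X \<and> card P = 2 \<and> Q \<subseteq> Y \<and> card Q = 2 \<and> R \<subseteq> Z \<and> card R = 2
     \<and> \<Sum>P + \<Sum>Q + \<Sum>R = 0"
proof -
  obtain R where R: "R \<subseteq> Z" "card R = 2" using getpair2[OF assms(2)] by blast
  obtain p q where pq: "p \<in> S2 X" "q \<in> S2 Y" "p + q = - \<Sum>R" using pig[OF assms(1)] by blast
  obtain P where P: "P \<subseteq> X" "card P = 2" "\<Sum>P = p" using getpair[OF pq(1)] by blast
  obtain Q where Q: "Q \<subseteq> Y" "card Q = 2" "\<Sum>Q = q" using getpair[OF pq(2)] by blast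
  have "\<Sum>P + \<Sum>Q + \<Sum>R = 0" using P Q pq by simp
  then show ?thesis using P Q R by blast
qed

lemma P222b:
  assumes X: "card X \<ge> 4" and Y: "card (Y::g3 set) = 3" and Z: "card Z = 3"
    and S: "card (sumset Y Z) \<ge> 5"
  shows "\<exists>P Q R. P \<subseteq> X \<and> card P = 2 \<and> Q \<subseteq> Y \<and> card Q = 2 \<and> R \<subseteq> Z \<and> card R = 2
     \<and> \<Sum>P + \<Sum>Q + \<Sum>R = 0"
proof -
  let ?W = "uminus ` sumset Y Z"
  have "card ?W = card (sumset Y Z)" by (simp add: card_image)
  then have "card (S2 X) + card ?W \<ge> 10" using S2_4[OF X] S by simp
  then obtain p w where pw: "p \<in> S2 X" "w \<in> ?W" "p + w = - (\<Sum>Y + \<Sum>Z)"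
    using pig[of "S2 X" ?W "- (\<Sum>Y + \<Sum>Z)"] by blast
  from pw(2) obtain s where s: "s \<in> sumset Y Z" "w = - s" by (rule imageE)
  from s(1) obtain y z where yz0: "y \<in> Y" "z \<in> Z" "s = y + z" unfolding sumset_def by blast
  have yz: "y \<in> Y" "z \<in> Z" "w = - (y + z)" using yz0 s by simp_all
  obtain P where P: "P \<subseteq> X" "card P = 2" "\<Sum>P = p" using getpair[OF pw(1)] by blast
  have fY: "finite Y" "finite Z" by simp_all
  have Q: "Y - {y} \<subseteq> Y" "card (Y - {y}) = 2" "\<Sum>(Y - {y}) = \<Sum>Y - y"
    using Y yz fY by (simp_all add: sum_diff1)
  have R: "Z - {z} \<subseteq> Z" "card (Z - {z}) = 2" "\<Sum>(Z - {z}) = \<Sum>Z - z"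
    using Z yz fY by (simp_all add: sum_diff1)
  have "\<Sum>P + \<Sum>(Y - {y}) + \<Sum>(Z - {z}) = p + (\<Sum>Y - y) + (\<Sum>Z - z)"
    by (simp only: P(3) Q(3) R(3))
  also have "\<dots> = (p + - (y + z)) + (\<Sum>Y + \<Sum>Z)" by (simp add: algebra_simps)
  also have "\<dots> = (p + w) + (\<Sum>Y + \<Sum>Z)" by (simp only: yz(3))
  also have "\<dots> = 0" using pw(3) by simp
  finally show ?thesis using P Q R by blast
qed

lemma hit:
  assumes "a \<in> line d (- (u + v))"
  shows "\<exists>x\<in>line d u. a + x + v = 0"
proof -
  let ?m = "a + u + v"
  have "a - (- (u + v)) \<in> Dset d" using assms line_iff by blast
  moreover have "a - (- (u + v)) = ?m" by (simp add: algebra_simps)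
  ultimately have m: "?m \<in> Dset d" by (simp only:)
  have e: "(u - ?m) - u = - ?m" by (simp add: algebra_simps)
  have "u - ?m \<in> line d u" unfolding line_iff e using Dset_neg[OF m] .
  moreover have "a + (u - ?m) + v = 0" by (simp add: algebra_simps)
  ultimately show ?thesis by blast
qed

lemma line_self: "c \<in> line d c" unfolding line_def by simp

lemma two_lines:
  assumes d: "d \<noteq> 0" and dj: "line d x \<inter> line d y = {}"
    and A: "A \<inter> line d x = {}" "A \<inter> line d y = {}"
  shows "card (A::g3 set) \<le> 3"
proof -
  have c6: "card (line d x \<union> line d y) = 6" using card_Un_disjoint[OF _ _ dj] line_card[OF d] by simp
  have "A \<inter> (line d x \<union> line d y) = {}" using A by blast
  then have "card (A \<union> (line d x \<union> line d y)) = card A + 6"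
    using card_Un_disjoint[of A "line d x \<union> line d y"] c6 by simp
  then show ?thesis using card_le9[of "A \<union> (line d x \<union> line d y)"] by simp
qed

lemma L4333:
  assumes c0: "card A0 = 4" and c1: "card A1 = 3" and c2: "card A2 = 3" and c3: "card A3 = 3"
  shows "GoodE A0 A1 A2 A3"
proof -
  have c0': "card A0 \<ge> 4" using c0 by simp
  show ?thesis
  proof (cases "card (sumset A1 A2) \<ge> 5")
    case True
    then obtain P Q R where "P \<subseteq> A0" "card P = 2" "Q \<subseteq> A1" "card Q = 2" "R \<subseteq> A2" "card R = 2"
       "\<Sum>P + \<Sum>Q + \<Sum>R = 0" using P222b[OF c0' c1 c2] by blast
    then show ?thesis by (intro GoodE_I[of P _ Q _ R _ "{}"]) simp_all
  next
    case n12: False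
    show ?thesis
    proof (cases "card (sumset A1 A3) \<ge> 5")
      case True
      then obtain P Q R where "P \<subseteq> A0" "card P = 2" "Q \<subseteq> A1" "card Q = 2" "R \<subseteq> A3" "card R = 2"
         "\<Sum>P + \<Sum>Q + \<Sum>R = 0" using P222b[OF c0' c1 c3] by blast
      then show ?thesis by (intro GoodE_I[of P _ Q _ "{}" _ R]) simp_all
    next
      case n13: False
      show ?thesis
      proof (cases "card (sumset A2 A3) \<ge> 5")
        case True
        then obtain P Q R where "P \<subseteq> A0" "card P = 2" "Q \<subseteq> A2" "card Q = 2" "R \<subseteq> A3" "card R = 2"
           "\<Sum>P + \<Sum>Q + \<Sum>R = 0" using P222b[OF c0' c2 c3] by blast
        then show ?thesis by (intro GoodE_I[of P _ "{}" _ Q _ R]) simp_all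
      next
        case n23: False
        have "card (sumset A1 A2) \<le> 4" using n12 by simp
        then obtain d u1 u2 where d: "d \<noteq> 0" and L1: "A1 = line d u1" and L2: "A2 = line d u2"
          using K[OF c1 c2] by blast
        have "card (sumset A1 A3) \<le> 4" using n13 by simp
        then obtain d' u1' u3 where d': "d' \<noteq> 0" and L1': "A1 = line d' u1'" and L3': "A3 = line d' u3"
          using K[OF c1 c3] by blast
        have "u1' \<in> A1" "u1' + d' \<in> A1" using L1' unfolding line_def by simp_all
        then have "u1' \<in> line d u1" "u1' + d' \<in> line d u1" using L1 by simp_all
        then have "(u1' + d') - u1' \<in> Dset d" by (rule line_diff)
        then have "d' \<in> Dset d" by simp
        then have "d' = d \<or> d' = - d" using d' unfolding Dset_def by simp
        then have "line d' u3 = line d u3" using line_neg[of d u3] by (elim disjE) simp_all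
        then have L3: "A3 = line d u3" using L3' by simp
        show ?thesis
        proof (cases "u1 + u2 + u3 \<in> Dset d")
          case True
          have z: "0 \<in> Dset d" unfolding Dset_def by simp
          obtain x1 y1 where p1: "x1 \<in> A1" "y1 \<in> A1" "x1 \<noteq> y1" "x1 + y1 = - u1 + 0"
            using line_pair[OF d z, of u1] L1 by blast
          obtain x2 y2 where p2: "x2 \<in> A2" "y2 \<in> A2" "x2 \<noteq> y2" "x2 + y2 = - u2 + 0"
            using line_pair[OF d z, of u2] L2 by blast
          obtain x3 y3 where p3: "x3 \<in> A3" "y3 \<in> A3" "x3 \<noteq> y3" "x3 + y3 = - u3 + (u1 + u2 + u3)"
            using line_pair[OF d True, of u3] L3 by blast
          have "\<Sum>{} + \<Sum>{x1,y1} + \<Sum>{x2,y2} + \<Sum>{x3,y3} = 0"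
            using p1 p2 p3 by (simp add: algebra_simps)
          then show ?thesis using p1 p2 p3 by (intro GoodE_I[of "{}" _ "{x1,y1}" _ "{x2,y2}" _ "{x3,y3}"]) simp_all
        next
          case False
          let ?T1 = "line d (- (u2 + u3))" and ?T2 = "line d (- (u1 + u3))" and ?T3 = "line d (- (u1 + u2))"
          have s1: "\<Sum>A1 = 0" "\<Sum>A2 = 0" "\<Sum>A3 = 0" using L1 L2 L3 line_sum[OF d] by simp_all
          have "\<exists>a\<in>A0. a \<in> ?T1 \<or> a \<in> ?T2 \<or> a \<in> ?T3"
          proof (rule ccontr)
            assume "\<not> ?thesis"
            then have A: "A0 \<inter> ?T1 = {}" "A0 \<inter> ?T2 = {}" "A0 \<inter> ?T3 = {}" by blast+
            have "?T1 \<inter> ?T2 \<noteq> {}" using two_lines[OF d _ A(1) A(2)] c0 by linarith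
            then obtain z where "z \<in> ?T1" "z \<in> ?T2" by blast
            then have e1: "- (u1 + u3) - - (u2 + u3) \<in> Dset d" by (rule line_meet)
            have "?T1 \<inter> ?T3 \<noteq> {}" using two_lines[OF d _ A(1) A(3)] c0 by linarith
            then obtain z' where "z' \<in> ?T1" "z' \<in> ?T3" by blast
            then have e2: "- (u1 + u2) - - (u2 + u3) \<in> Dset d" by (rule line_meet)
            have "(- (u1 + u3) - - (u2 + u3)) + (- (u1 + u2) - - (u2 + u3)) = u2 + u3 - u1 - u1"
              by (simp add: algebra_simps)
            also have "\<dots> = u2 + u3 + (- u1 - u1)" by (simp add: algebra_simps)
            also have "\<dots> = u2 + u3 + u1" by (simp only: dbl_neg)
            also have "\<dots> = u1 + u2 + u3" by (simp add: algebra_simps)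
            finally have eq: "(- (u1 + u3) - - (u2 + u3)) + (- (u1 + u2) - - (u2 + u3)) = u1 + u2 + u3" .
            have "u1 + u2 + u3 \<in> Dset d" using Dset_add[OF e1 e2] unfolding eq .
            then show False using False by simp
          qed
          then obtain a where a: "a \<in> A0" "a \<in> ?T1 \<or> a \<in> ?T2 \<or> a \<in> ?T3" by blast
          have aa: "{a} \<subseteq> A0" using a by simp
          consider "a \<in> ?T1" | "a \<in> ?T2" | "a \<in> ?T3" using a by blast
          then show ?thesis
          proof cases
            case 1
            obtain x where x: "x \<in> line d u2" "a + x + u3 = 0" using hit[OF 1] by blast
            have "u3 \<in> A3" using L3 line_self by simp
            moreover have "\<Sum>{a} + \<Sum>A1 + \<Sum>{x} + \<Sum>{u3} = 0" using x s1 by simp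
            ultimately show ?thesis using aa x L2 c1
              by (intro GoodE_I[of "{a}" _ A1 _ "{x}" _ "{u3}"]) simp_all
          next
            case 2
            obtain x where x: "x \<in> line d u1" "a + x + u3 = 0" using hit[OF 2] by blast
            have "u3 \<in> A3" using L3 line_self by simp
            moreover have "\<Sum>{a} + \<Sum>{x} + \<Sum>A2 + \<Sum>{u3} = 0" using x s1 by (simp add: algebra_simps)
            ultimately show ?thesis using aa x L1 c2
              by (intro GoodE_I[of "{a}" _ "{x}" _ A2 _ "{u3}"]) simp_all
          next
            case 3
            obtain x where x: "x \<in> line d u1" "a + x + u2 = 0" using hit[OF 3] by blast
            have "u2 \<in> A2" using L2 line_self by simp
            moreover have "\<Sum>{a} + \<Sum>{x} + \<Sum>{u2} + \<Sum>A3 = 0" using x s1 by (simp add: algebra_simps)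
            ultimately show ?thesis using aa x L1 c3
              by (intro GoodE_I[of "{a}" _ "{x}" _ "{u2}" _ A3]) simp_all
          qed
        qed
      qed
    qed
  qed
qed

lemma Rcore:
  assumes o: "card A1 \<le> card A0" "card A2 \<le> card A1" "card A3 \<le> card A2"
    and s: "card A0 + card A1 + card A2 + card A3 = 13"
  shows "GoodE A0 A1 A2 A3"
proof -
  have b: "card A0 \<le> 9" "card A1 \<le> 9" "card A2 \<le> 9" "card A3 \<le> 9" by (simp_all add: card_le9)
  consider (a) "card A0 \<ge> 6" | (b) "card A0 \<le> 5" "card A1 \<ge> 4" | (c) "card A0 = 5" "card A1 \<le> 3"
    | (d) "card A0 \<le> 4" "card A1 \<le> 3" by linarith
  then show ?thesis
  proof cases
    case a
    have "card A1 \<ge> 2" using a o s b by linarith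
    then obtain P where P: "P \<subseteq> A1" "card P = 2" by (rule getpair2)
    obtain B where B: "B \<subseteq> A0" "card B = 4" "\<Sum>B = - \<Sum>P" using S4_full[OF a] by blast
    show ?thesis using B P by (intro GoodE_I[of B _ P _ "{}" _ "{}"]) simp_all
  next
    case b
    have h2: "card A2 \<ge> 2" using b o s by linarith
    have "card A0 \<ge> 4" using b o by linarith
    then have h0: "card (S2 A0) \<ge> 5" by (rule S2_4)
    have h1: "card (S2 A1) \<ge> 5" using b(2) by (rule S2_4)
    have h10: "card (S2 A0) + card (S2 A1) \<ge> 10" using h0 h1 by linarith
    obtain P Q R where "P \<subseteq> A0" "card P = 2" "Q \<subseteq> A1" "card Q = 2" "R \<subseteq> A2" "card R = 2"
       "\<Sum>P + \<Sum>Q + \<Sum>R = 0" using P222a[OF h10 h2] by blast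
    then show ?thesis by (intro GoodE_I[of P _ Q _ R _ "{}"]) simp_all
  next
    case c
    have h2: "card A2 \<ge> 2" and h1': "card A1 \<ge> 3" using c o s by linarith+
    have "card A0 \<ge> 5" using c by simp
    then have h0: "card (S2 A0) \<ge> 7" by (rule S2_5)
    have h1: "card (S2 A1) \<ge> 3" using h1' by (rule S2_3)
    have h10: "card (S2 A0) + card (S2 A1) \<ge> 10" using h0 h1 by linarith
    obtain P Q R where "P \<subseteq> A0" "card P = 2" "Q \<subseteq> A1" "card Q = 2" "R \<subseteq> A2" "card R = 2"
       "\<Sum>P + \<Sum>Q + \<Sum>R = 0" using P222a[OF h10 h2] by blast
    then show ?thesis by (intro GoodE_I[of P _ Q _ R _ "{}"]) simp_all
  next
    case d
    have "card A0 = 4" "card A1 = 3" "card A2 = 3" "card A3 = 3" using d o s by linarith+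
    then show ?thesis by (rule L4333)
  qed
qed

lemma s01: "GoodE A1 A0 A2 A3 \<Longrightarrow> GoodE A0 A1 A2 A3"
  unfolding GoodE_def by (elim exE conjE) (rule_tac x=B1 in exI, rule_tac x=B0 in exI, rule_tac x=B2 in exI, rule_tac x=B3 in exI, auto simp: ac_simps)

lemma s12: "GoodE A0 A2 A1 A3 \<Longrightarrow> GoodE A0 A1 A2 A3"
  unfolding GoodE_def by (elim exE conjE) (rule_tac x=B0 in exI, rule_tac x=B2 in exI, rule_tac x=B1 in exI, rule_tac x=B3 in exI, auto simp: ac_simps)

lemma s23: "GoodE A0 A1 A3 A2 \<Longrightarrow> GoodE A0 A1 A2 A3"
  unfolding GoodE_def by (elim exE conjE) (rule_tac x=B0 in exI, rule_tac x=B1 in exI, rule_tac x=B3 in exI, rule_tac x=B2 in exI, auto simp: ac_simps)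

lemma s02: "GoodE A2 A1 A0 A3 \<Longrightarrow> GoodE A0 A1 A2 A3"
  unfolding GoodE_def by (elim exE conjE) (rule_tac x=B2 in exI, rule_tac x=B1 in exI, rule_tac x=B0 in exI, rule_tac x=B3 in exI, auto simp: ac_simps)

lemma s03: "GoodE A3 A1 A2 A0 \<Longrightarrow> GoodE A0 A1 A2 A3"
  unfolding GoodE_def by (elim exE conjE) (rule_tac x=B3 in exI, rule_tac x=B1 in exI, rule_tac x=B2 in exI, rule_tac x=B0 in exI, auto simp: ac_simps)

lemma R1:
  assumes m: "card A1 \<le> card A0" "card A2 \<le> card A0" "card A3 \<le> card A0"
    and s: "card A0 + card A1 + card A2 + card A3 = 13"
  shows "GoodE A0 A1 A2 A3"
proof -
  consider "card A2 \<le> card A1" "card A3 \<le> card A2" | "card A3 \<le> card A1" "card A2 \<le> card A3"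
    | "card A1 \<le> card A2" "card A3 \<le> card A1" | "card A3 \<le> card A2" "card A1 \<le> card A3"
    | "card A1 \<le> card A3" "card A2 \<le> card A1" | "card A2 \<le> card A3" "card A1 \<le> card A2"
    by linarith
  then show ?thesis
  proof cases
    case 1 then show ?thesis using Rcore m s by simp
  next
    case 2
    have "GoodE A0 A1 A3 A2" using Rcore[of A1 A0 A3 A2] 2 m s by simp
    then show ?thesis by (rule s23)
  next
    case 3
    have "GoodE A0 A2 A1 A3" using Rcore[of A2 A0 A1 A3] 3 m s by simp
    then show ?thesis by (rule s12)
  next
    case 4
    have "GoodE A0 A2 A3 A1" using Rcore[of A2 A0 A3 A1] 4 m s by simp
    then have "GoodE A0 A2 A1 A3" by (rule s23)
    then show ?thesis by (rule s12)
  next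
    case 5
    have "GoodE A0 A3 A1 A2" using Rcore[of A3 A0 A1 A2] 5 m s by simp
    then have "GoodE A0 A1 A3 A2" by (rule s12)
    then show ?thesis by (rule s23)
  next
    case 6
    have "GoodE A0 A3 A2 A1" using Rcore[of A3 A0 A2 A1] 6 m s by simp
    then have "GoodE A0 A2 A3 A1" by (rule s12)
    then have "GoodE A0 A2 A1 A3" by (rule s23)
    then show ?thesis by (rule s12)
  qed
qed

lemma Rall:
  assumes s: "card A0 + card A1 + card A2 + card A3 = 13"
  shows "GoodE A0 A1 A2 A3"
proof -
  consider "card A1 \<le> card A0" "card A2 \<le> card A0" "card A3 \<le> card A0"
    | "card A0 \<le> card A1" "card A2 \<le> card A1" "card A3 \<le> card A1"
    | "card A0 \<le> card A2" "card A1 \<le> card A2" "card A3 \<le> card A2"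
    | "card A0 \<le> card A3" "card A1 \<le> card A3" "card A2 \<le> card A3"
    by linarith
  then show ?thesis
  proof cases
    case 1 then show ?thesis using R1 s by simp
  next
    case 2
    have "GoodE A1 A0 A2 A3" using R1[of A0 A1 A2 A3] 2 s by simp
    then show ?thesis by (rule s01)
  next
    case 3
    have "GoodE A2 A1 A0 A3" using R1[of A1 A2 A0 A3] 3 s by simp
    then show ?thesis by (rule s02)
  next
    case 4
    have "GoodE A3 A1 A2 A0" using R1[of A1 A3 A2 A0] 4 s by simp
    then show ?thesis by (rule s03)
  qed
qed


lemma UNIV6: "(UNIV::6 set) = {0,1,2,3,4,5}"
  by (rule sym, rule card_subset_eq) auto

definition f6 :: "6 \<Rightarrow> 3" where "f6 a = of_int (Rep_bit0 a)"

lemma all6: "(\<forall>a::6. P a) \<longleftrightarrow> P 0 \<and> P 1 \<and> P 2 \<and> P 3 \<and> P 4 \<and> P 5"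
  by (metis UNIV6 UNIV_I empty_iff insert_iff)

lemma f6_add: "f6 (a+b) = f6 a + f6 b"
proof -
  have "\<forall>a b. f6 (a+b) = f6 a + f6 b" unfolding all6 f6_def
    by (simp add: bit0.Rep_numeral bit0.Rep_0 bit0.Rep_1)
  then show ?thesis by blast
qed

lemma f6_0: "f6 0 = 0" unfolding f6_def by (simp add: bit0.Rep_0)

lemma kap6: "(a::6) + a + a = 0 \<or> a + a + a = 3"
proof -
  have "\<forall>a::6. a + a + a = 0 \<or> a + a + a = 3" unfolding all6 by simp
  then show ?thesis by blast
qed

lemma inj6: "(a::6) + a + a = b + b + b \<Longrightarrow> f6 a = f6 b \<Longrightarrow> a = b"
proof -
  have "\<forall>a b::6. a + a + a = b + b + b \<longrightarrow> f6 a = f6 b \<longrightarrow> a = b" unfolding all6 f6_def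
    by (simp add: bit0.Rep_numeral bit0.Rep_0 bit0.Rep_1)
  then show "(a::6) + a + a = b + b + b \<Longrightarrow> f6 a = f6 b \<Longrightarrow> a = b" by blast
qed

lemma zero6: "(a::6) + a + a = 0 \<Longrightarrow> f6 a = 0 \<Longrightarrow> a = 0"
  using inj6[of a 0] f6_0 by simp

lemma sumU6: "(\<Sum>b\<in>(UNIV::6 set). b) = 3"
  unfolding UNIV6 by simp

lemma of_nat6: "n \<le> 6 \<Longrightarrow> (of_nat n :: 6) = 0 \<Longrightarrow> n = 0 \<or> n = 6"
proof -
  assume "n \<le> 6" "(of_nat n :: 6) = 0"
  moreover have "n = 0 \<or> n = 1 \<or> n = 2 \<or> n = 3 \<or> n = 4 \<or> n = 5 \<or> n = 6" using \<open>n \<le> 6\<close> by arith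
  ultimately show ?thesis by (elim disjE) simp_all
qed



definition phi :: "6 \<times> 6 \<Rightarrow> g3" where "phi x = (f6 (fst x), f6 (snd x))"
definition kap :: "6 \<times> 6 \<Rightarrow> 6 \<times> 6" where "kap x = x + x + x"

lemma phi_add: "phi (x + y) = phi x + phi y"
  unfolding phi_def by (simp add: f6_add)

lemma phi_0: "phi 0 = 0"
  unfolding phi_def by (simp add: f6_0 zero_prod_def)

lemma kap_add: "kap (x + y) = kap x + kap y"
  unfolding kap_def by (simp add: ac_simps)

lemma phi_sum: "phi (\<Sum>S) = (\<Sum>x\<in>S. phi x)"
proof -
  have "finite S" by simp
  then show ?thesis
    by (induction S rule: finite_induct) (simp_all add: phi_0 phi_add)
qed

lemma kap_sum: "kap (\<Sum>S) = (\<Sum>x\<in>S. kap x)"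
  unfolding kap_def by (simp add: sum.distrib)

lemma kap_vals: "kap x = (0,0) \<or> kap x = (0,3) \<or> kap x = (3,0) \<or> kap x = (3,3)"
proof -
  obtain a b where x: "x = (a, b)" by (cases x)
  have "kap x = (a + a + a, b + b + b)" unfolding kap_def x by simp
  then show ?thesis using kap6[of a] kap6[of b] by auto
qed

lemma phikap_inj: "kap x = kap y \<Longrightarrow> phi x = phi y \<Longrightarrow> x = y"
proof -
  assume h: "kap x = kap y" "phi x = phi y"
  obtain a b where x: "x = (a, b)" by (cases x)
  obtain c d where y: "y = (c, d)" by (cases y)
  have "a + a + a = c + c + c" "b + b + b = d + d + d" using h(1) unfolding kap_def x y by simp_all
  moreover have "f6 a = f6 c" "f6 b = f6 d" using h(2) unfolding phi_def x y by simp_all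
  ultimately show ?thesis using inj6 x y by simp
qed

lemma phikap_zero: "kap z = 0 \<Longrightarrow> phi z = 0 \<Longrightarrow> z = 0"
  using phikap_inj[of z 0] phi_0 by (simp add: kap_def)

lemma sum_const2:
  fixes c :: "6 \<times> 6"
  assumes c: "c + c = 0" and T: "finite T"
  shows "(\<Sum>x\<in>T. c) = (if even (card T) then 0 else c)"
  using T
proof (induction T rule: finite_induct)
  case empty then show ?case by simp
next
  case (insert x F)
  then show ?case using c by auto
qed

lemma main13:
  fixes X :: "(6 \<times> 6) set"
  assumes X: "card X = 13"
  shows "\<exists>S. S \<subseteq> X \<and> card S = 6 \<and> (\<Sum>s\<in>S. s) = 0"
proof -
  define k0 k1 k2 k3 where "k0 = ((0,0) :: 6 \<times> 6)" and "k1 = ((0,3) :: 6 \<times> 6)"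
    and "k2 = ((3,0) :: 6 \<times> 6)" and "k3 = ((3,3) :: 6 \<times> 6)"
  have kd: "k0 \<noteq> k1" "k0 \<noteq> k2" "k0 \<noteq> k3" "k1 \<noteq> k2" "k1 \<noteq> k3" "k2 \<noteq> k3"
    unfolding k0_def k1_def k2_def k3_def by simp_all
  have kk: "k0 + k0 = 0" "k1 + k1 = 0" "k2 + k2 = 0" "k3 + k3 = 0" "k0 + k1 + k2 + k3 = 0"
    unfolding k0_def k1_def k2_def k3_def by (simp_all add: zero_prod_def)
  define C0 where "C0 = {x\<in>X. kap x = k0}"
  define C1 where "C1 = {x\<in>X. kap x = k1}"
  define C2 where "C2 = {x\<in>X. kap x = k2}"
  define C3 where "C3 = {x\<in>X. kap x = k3}"
  have XU: "X = C0 \<union> C1 \<union> C2 \<union> C3"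
    unfolding C0_def C1_def C2_def C3_def k0_def k1_def k2_def k3_def using kap_vals by blast
  have d01: "C0 \<inter> C1 = {}" "C0 \<inter> C2 = {}" "C0 \<inter> C3 = {}" "C1 \<inter> C2 = {}" "C1 \<inter> C3 = {}" "C2 \<inter> C3 = {}"
    unfolding C0_def C1_def C2_def C3_def using kd by blast+
  have cX: "card X = card C0 + card C1 + card C2 + card C3"
  proof -
    have "card X = card (C0 \<union> C1 \<union> C2) + card C3"
      unfolding XU by (rule card_Un_disjoint) (use d01 in auto)
    also have "card (C0 \<union> C1 \<union> C2) = card (C0 \<union> C1) + card C2"
      by (rule card_Un_disjoint) (use d01 in auto)
    also have "card (C0 \<union> C1) = card C0 + card C1"
      by (rule card_Un_disjoint) (use d01 in auto)
    finally show ?thesis .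
  qed
  have inj: "inj_on phi C0" "inj_on phi C1" "inj_on phi C2" "inj_on phi C3"
    unfolding C0_def C1_def C2_def C3_def inj_on_def using phikap_inj by (metis (mono_tags, lifting) mem_Collect_eq)+
  have cA: "card (phi ` C0) = card C0" "card (phi ` C1) = card C1" "card (phi ` C2) = card C2"
    "card (phi ` C3) = card C3" using inj by (simp_all add: card_image)
  have "GoodE (phi ` C0) (phi ` C1) (phi ` C2) (phi ` C3)"
    by (rule Rall) (use X cX cA in simp)
  then obtain B0 B1 B2 B3 where B: "B0 \<subseteq> phi ` C0" "B1 \<subseteq> phi ` C1" "B2 \<subseteq> phi ` C2" "B3 \<subseteq> phi ` C3"
     "card B0 + card B1 + card B2 + card B3 = 6"
     "(even (card B0) \<and> even (card B1) \<and> even (card B2) \<and> even (card B3)) \<or>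
      (odd (card B0) \<and> odd (card B1) \<and> odd (card B2) \<and> odd (card B3))"
     "\<Sum>B0 + \<Sum>B1 + \<Sum>B2 + \<Sum>B3 = 0"
    unfolding GoodE_def by blast
  define S0 where "S0 = {x\<in>C0. phi x \<in> B0}"
  define S1 where "S1 = {x\<in>C1. phi x \<in> B1}"
  define S2' where "S2' = {x\<in>C2. phi x \<in> B2}"
  define S3 where "S3 = {x\<in>C3. phi x \<in> B3}"
  have sub: "S0 \<subseteq> C0" "S1 \<subseteq> C1" "S2' \<subseteq> C2" "S3 \<subseteq> C3"
    unfolding S0_def S1_def S2'_def S3_def by auto
  have im: "phi ` S0 = B0" "phi ` S1 = B1" "phi ` S2' = B2" "phi ` S3 = B3"
    unfolding S0_def S1_def S2'_def S3_def using B(1-4) by auto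
  have injS: "inj_on phi S0" "inj_on phi S1" "inj_on phi S2'" "inj_on phi S3"
    using inj sub by (auto intro: inj_on_subset)
  have cS: "card S0 = card B0" "card S1 = card B1" "card S2' = card B2" "card S3 = card B3"
    using injS im by (metis card_image)+
  have sS: "\<Sum>B0 = (\<Sum>x\<in>S0. phi x)" "\<Sum>B1 = (\<Sum>x\<in>S1. phi x)" "\<Sum>B2 = (\<Sum>x\<in>S2'. phi x)"
     "\<Sum>B3 = (\<Sum>x\<in>S3. phi x)"
    using injS im by (metis sum.reindex o_apply sum.cong id_apply)+
  have kS: "\<And>x. x \<in> S0 \<Longrightarrow> kap x = k0" "\<And>x. x \<in> S1 \<Longrightarrow> kap x = k1"
     "\<And>x. x \<in> S2' \<Longrightarrow> kap x = k2" "\<And>x. x \<in> S3 \<Longrightarrow> kap x = k3"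
    using sub unfolding C0_def C1_def C2_def C3_def by auto
  have dsub: "\<And>A B C D. A \<subseteq> C \<Longrightarrow> B \<subseteq> D \<Longrightarrow> C \<inter> D = {} \<Longrightarrow> A \<inter> B = {}" by blast
  have u1: "S0 \<union> S1 \<union> S2' \<subseteq> C0 \<union> C1 \<union> C2" "S0 \<union> S1 \<subseteq> C0 \<union> C1" using sub by blast+
  have u2: "(C0 \<union> C1 \<union> C2) \<inter> C3 = {}" "(C0 \<union> C1) \<inter> C2 = {}" using d01 by (simp_all add: Int_Un_distrib2)
  have dS: "(S0 \<union> S1 \<union> S2') \<inter> S3 = {}" "(S0 \<union> S1) \<inter> S2' = {}" "S0 \<inter> S1 = {}"
    using dsub[OF u1(1) sub(4) u2(1)] dsub[OF u1(2) sub(3) u2(2)] dsub[OF sub(1) sub(2) d01(1)] by simp_all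
  define S where "S = S0 \<union> S1 \<union> S2' \<union> S3"
  have SX: "S \<subseteq> X" unfolding S_def XU using sub by (meson Un_mono)
  have cardS: "card S = 6"
  proof -
    have "card S = card (S0 \<union> S1 \<union> S2') + card S3"
      unfolding S_def by (rule card_Un_disjoint) (use dS in auto)
    also have "card (S0 \<union> S1 \<union> S2') = card (S0 \<union> S1) + card S2'"
      by (rule card_Un_disjoint) (use dS in auto)
    also have "card (S0 \<union> S1) = card S0 + card S1"
      by (rule card_Un_disjoint) (use dS in auto)
    finally show ?thesis using cS B(5) by simp
  qed
  have sumS: "\<Sum>S = \<Sum>S0 + \<Sum>S1 + \<Sum>S2' + \<Sum>S3"
  proof -
    have "\<Sum>S = \<Sum>(S0 \<union> S1 \<union> S2') + \<Sum>S3"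
      unfolding S_def by (rule sum.union_disjoint) (use dS in auto)
    also have "\<Sum>(S0 \<union> S1 \<union> S2') = \<Sum>(S0 \<union> S1) + \<Sum>S2'"
      by (rule sum.union_disjoint) (use dS in auto)
    also have "\<Sum>(S0 \<union> S1) = \<Sum>S0 + \<Sum>S1"
      by (rule sum.union_disjoint) (use dS in auto)
    finally show ?thesis .
  qed
  have p: "phi (\<Sum>S) = 0"
    unfolding sumS phi_add phi_sum using B(7) sS by simp
  have k: "kap (\<Sum>S) = 0"
  proof -
    have e0: "kap (\<Sum>S0) = (if even (card S0) then 0 else k0)"
    proof -
      have "(\<Sum>x\<in>S0. kap x) = (\<Sum>x\<in>S0. k0)" using kS(1) by (intro sum.cong) auto
      then show ?thesis unfolding kap_sum by (simp add: sum_const2[OF kk(1)])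
    qed
    have e1: "kap (\<Sum>S1) = (if even (card S1) then 0 else k1)"
    proof -
      have "(\<Sum>x\<in>S1. kap x) = (\<Sum>x\<in>S1. k1)" using kS(2) by (intro sum.cong) auto
      then show ?thesis unfolding kap_sum by (simp add: sum_const2[OF kk(2)])
    qed
    have e2: "kap (\<Sum>S2') = (if even (card S2') then 0 else k2)"
    proof -
      have "(\<Sum>x\<in>S2'. kap x) = (\<Sum>x\<in>S2'. k2)" using kS(3) by (intro sum.cong) auto
      then show ?thesis unfolding kap_sum by (simp add: sum_const2[OF kk(3)])
    qed
    have e3: "kap (\<Sum>S3) = (if even (card S3) then 0 else k3)"
    proof -
      have "(\<Sum>x\<in>S3. kap x) = (\<Sum>x\<in>S3. k3)" using kS(4) by (intro sum.cong) auto
      then show ?thesis unfolding kap_sum by (simp add: sum_const2[OF kk(4)])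
    qed
    show ?thesis unfolding sumS kap_add e0 e1 e2 e3 cS using B(6) kk(5) by auto
  qed
  have "\<Sum>S = 0" using phikap_zero[OF k p] .
  then show ?thesis using SX cardS by blast
qed


lemma six6: "6 * (a::6) = 0"
proof -
  have "\<forall>a::6. 6 * a = 0" unfolding all6 by simp
  then show ?thesis by blast
qed

lemma gexp: "group_exp TYPE(6 \<times> 6) = 6"
  unfolding group_exp_def
proof (rule Least_equality)
  show "0 < (6::nat) \<and> (\<forall>x::6 \<times> 6. (\<Sum>i<(6::nat). x) = 0)"
  proof (intro conjI allI)
    fix x :: "6 \<times> 6"
    obtain a b where x: "x = (a, b)" by (cases x)
    have "(\<Sum>i<(6::nat). x) = x + x + x + x + x + x" by (simp add: numeral_eq_Suc ac_simps)
    also have "\<dots> = 0" unfolding x by (simp add: six6 zero_prod_def)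
    finally show "(\<Sum>i<(6::nat). x) = 0" .
  qed simp
next
  fix m :: nat
  assume h: "0 < m \<and> (\<forall>x::6 \<times> 6. (\<Sum>i<m. x) = 0)"
  show "6 \<le> m"
  proof (rule ccontr)
    assume "\<not> 6 \<le> m"
    then have m6: "m \<le> 6" "m \<noteq> 6" by simp_all
    have "(\<Sum>i<m. ((1::6), (0::6))) = 0" using h by blast
    then have "fst (\<Sum>i<m. ((1::6), (0::6))) = 0" by (simp add: zero_prod_def)
    then have "(\<Sum>i<m. (1::6)) = 0" by (simp add: fst_sum)
    then have "(of_nat m :: 6) = 0" by simp
    then have "m = 0 \<or> m = 6" using of_nat6 m6 by blast
    then show False using h m6 by simp
  qed
qed

lemma row_sum:
  fixes c :: 6
  shows "snd (\<Sum>({c} \<times> (UNIV::6 set))) = 3"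
proof -
  have "{c} \<times> (UNIV::6 set) = Pair c ` UNIV" by auto
  then have "(\<Sum>({c} \<times> (UNIV::6 set))) = (\<Sum>b\<in>UNIV. (c, b))"
    by (simp add: sum.reindex inj_on_def)
  then have "snd (\<Sum>({c} \<times> (UNIV::6 set))) = (\<Sum>b\<in>(UNIV::6 set). b)" by (simp add: snd_sum)
  then show ?thesis using sumU6 by simp
qed

lemma card_row: "card ({c} \<times> (UNIV::6 set)) = 6"
  by (simp add: card_cartesian_product)

lemma noZS:
  fixes S :: "(6 \<times> 6) set"
  assumes S: "S \<subseteq> {0,1} \<times> UNIV" and c: "card S = 6"
  shows "\<Sum>S \<noteq> 0"
proof
  assume z: "\<Sum>S = 0"
  define S1 where "S1 = {x\<in>S. fst x = 1}"
  have fin: "finite S" "finite S1" by simp_all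
  have sub1: "S1 \<subseteq> S" unfolding S1_def by blast
  have "(\<Sum>x\<in>S. fst x) = (\<Sum>x\<in>S1. fst x) + (\<Sum>x\<in>S - S1. fst x)"
    using sum.subset_diff[OF sub1 fin(1), of fst] by simp
  also have "(\<Sum>x\<in>S1. fst x) = (\<Sum>x\<in>S1. 1)" unfolding S1_def by (intro sum.cong) auto
  also have "(\<Sum>x\<in>S - S1. fst x) = (\<Sum>x\<in>S - S1. 0)"
  proof (intro sum.cong refl)
    fix x assume "x \<in> S - S1"
    then have "fst x \<in> {0,1}" "fst x \<noteq> 1" using S unfolding S1_def by auto
    then show "fst x = 0" by simp
  qed
  finally have "(\<Sum>x\<in>S. fst x) = of_nat (card S1)" by simp
  moreover have "(\<Sum>x\<in>S. fst x) = fst (\<Sum>S)" by (simp add: fst_sum)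
  ultimately have "(of_nat (card S1) :: 6) = 0" using z by (simp add: zero_prod_def)
  moreover have "card S1 \<le> 6" using card_mono[OF fin(1) sub1] c by simp
  ultimately have "card S1 = 0 \<or> card S1 = 6" using of_nat6 by blast
  then obtain r :: 6 where r: "S \<subseteq> {r} \<times> UNIV"
  proof
    assume "card S1 = 0"
    then have "S1 = {}" using fin by simp
    then have "S \<subseteq> {0} \<times> UNIV" using S unfolding S1_def by auto
    then show ?thesis by (rule that)
  next
    assume "card S1 = 6"
    then have "S1 = S" using card_subset_eq[OF fin(1) sub1] c by simp
    have "S \<subseteq> {1} \<times> UNIV"
    proof
      fix x assume "x \<in> S"
      then have "fst x = 1" using \<open>S1 = S\<close> unfolding S1_def by blast
      then show "x \<in> {1} \<times> UNIV" by (cases x) simp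
    qed
    then show ?thesis by (rule that)
  qed
  then have "S = {r} \<times> UNIV" using card_subset_eq[of "{r} \<times> UNIV" S] card_row c by simp
  then have "snd (\<Sum>S) = 3" using row_sum by simp
  then show False using z by (simp add: zero_prod_def)
qed

lemma gconst: "g_const TYPE(6 \<times> 6) = 13"
  unfolding g_const_def gexp
proof (rule Least_equality)
  show "0 < (13::nat) \<and> (\<forall>X::(6 \<times> 6) set. 13 \<le> card X \<longrightarrow> has_zero_sum_subset 6 X)"
  proof (intro conjI allI impI)
    fix X :: "(6 \<times> 6) set"
    assume "13 \<le> card X"
    then obtain Y where Y: "Y \<subseteq> X" "card Y = 13" "finite Y" by (rule obtain_subset_with_card_n)
    obtain S where "S \<subseteq> Y" "card S = 6" "(\<Sum>s\<in>S. s) = 0" using main13[OF Y(2)] by blast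
    then show "has_zero_sum_subset 6 X" unfolding has_zero_sum_subset_def using Y(1) by blast
  qed simp
next
  fix t :: nat
  assume h: "0 < t \<and> (\<forall>X::(6 \<times> 6) set. t \<le> card X \<longrightarrow> has_zero_sum_subset 6 X)"
  show "13 \<le> t"
  proof (rule ccontr)
    assume "\<not> 13 \<le> t"
    moreover have "card {0,1::6} = 2" by simp
    ultimately have "t \<le> card ({0,1::6} \<times> (UNIV::6 set))" by (simp add: card_cartesian_product)
    then have "has_zero_sum_subset 6 ({0,1::6} \<times> (UNIV::6 set))" using h by blast
    then obtain S where "S \<subseteq> {0,1::6} \<times> (UNIV::6 set)" "card S = 6" "\<Sum>S = 0"
      unfolding has_zero_sum_subset_def by blast
    then show False using noZS by blast
  qed
qed

theorem theorem4p1: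
  shows "(\<forall>X::(6 \<times> 6) set. card X = 13 \<longrightarrow>
            (\<exists>S. S \<subseteq> X \<and> card S = 6 \<and> (\<Sum>s\<in>S. s) = (0, 0)))
         \<and> g_const TYPE(6 \<times> 6) = 13"
proof (intro conjI allI impI)
  fix X :: "(6 \<times> 6) set"
  assume "card X = 13"
  then show "\<exists>S. S \<subseteq> X \<and> card S = 6 \<and> (\<Sum>s\<in>S. s) = (0, 0)"
    using main13 by (simp add: zero_prod_def)
next
  show "g_const TYPE(6 \<times> 6) = 13" by (rule gconst)
qed

end
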